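(* Let $k$ and $n$ be positive integers with $1 \leqslant k<n$. Suppose that there exists a prime $p>\max\{(k+2)(k+3)/2,\ 3k+8\}$ such that \[ \frac{n}{k+3}<p \leqslant \frac{n}{k+1}. \] Then for every $i\in\{1,2,\ldots,n\}$, the number \[ S(n,i,k)=\sum_{\substack{1 \leqslant i_1<i_2<\cdots<i_k \leqslant n,\\ i_j \neq i \text{ for } j=1,2,\ldots,k}} \frac{1}{i_1 i_2 \cdots i_k} \] is not an integer.
   Context: For integers $n,i,k$ with $1\leqslant k<n$ and $1\leqslant i\leqslant n$, $S(n,i,k)$ denotes the $k$-th elementary symmetric function of the $n-1$ numbers $\{1,1/2,\ldots,1/n\}\setminus\{1/i\}$. *)

theory Defs
  imports Complex_Main "HOL-Computational_Algebra.Primes"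
begin

definition S :: "nat \<Rightarrow> nat \<Rightarrow> nat \<Rightarrow> real" where
  "S n i k = (\<Sum>T\<in>{T. T \<subseteq> {1..n} - {i} \<and> card T = k}. \<Prod>j\<in>T. 1 / real j)"

end

theory Submission
  imports Defs
begin

lemma gauss2: "2 * (\<Sum>b\<in>{1..<c::nat}. b) = c * (c - 1)"
  by (induction c) (auto simp: algebra_simps)

lemma e2: "24 * (\<Sum>c\<in>{1..m::nat}. c * (\<Sum>b\<in>{1..<c}. b)) = (m-1)*m*(m+1)*(3*m+2)"
proof (induction m)
  case 0 then show ?case by simp
next
  case (Suc m)
  have g: "2 * (\<Sum>b\<in>{1..<Suc m}. b) = Suc m * m" using gauss2[of "Suc m"] by simp
  have "24 * (\<Sum>c\<in>{1..Suc m}. c * (\<Sum>b\<in>{1..<c}. b))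
     = 24 * (\<Sum>c\<in>{1..m}. c * (\<Sum>b\<in>{1..<c}. b)) + 12 * Suc m * (2 * (\<Sum>b\<in>{1..<Suc m}. b))"
    by (simp add: algebra_simps)
  also have "\<dots> = (m-1)*m*(m+1)*(3*m+2) + 12 * Suc m * (Suc m * m)" using Suc g by simp
  also have "\<dots> = (Suc m - 1) * Suc m * (Suc m + 1) * (3 * Suc m + 2)"
    by (cases m) (simp_all add: algebra_simps)
  finally show ?case .
qed

lemma card1_sum: assumes "finite X"
  shows "(\<Sum>B\<in>{B. B \<subseteq> X \<and> card B = 1}. \<Prod>B) = (\<Sum>X :: nat)"
proof -
  have "(\<Sum>B\<in>{B. B \<subseteq> X \<and> card B = 1}. \<Prod>B) = (\<Sum>x\<in>X. x)"
    by (rule sum.reindex_bij_witness[where i="\<lambda>x. {x}" and j="the_elem"])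
       (auto simp: card_1_singleton_iff)
  then show ?thesis by simp
qed

lemma card1_fix: "{B. B \<subseteq> X \<and> card B = 1 \<and> a \<in> B} = (if a \<in> X then {{a}} else {})"
  by (auto simp: card_1_singleton_iff)

lemma card2_fix: assumes "finite X" "a \<in> X"
  shows "(\<Sum>B\<in>{B. B \<subseteq> X \<and> card B = 2 \<and> a \<in> B}. \<Prod>B) = a * (\<Sum>(X - {a}) :: nat)"
proof -
  have "(\<Sum>B\<in>{B. B \<subseteq> X \<and> card B = 2 \<and> a \<in> B}. \<Prod>B) = (\<Sum>b\<in>X-{a}. a * b)"
  proof (rule sum.reindex_bij_witness[where i="\<lambda>b. {a,b}" and j="\<lambda>B. the_elem (B - {a})"])
    fix B assume B: "B \<in> {B. B \<subseteq> X \<and> card B = 2 \<and> a \<in> B}"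
    then obtain x y where "B = {x,y}" "x \<noteq> y" by (auto simp: card_2_iff)
    with B show "{a, the_elem (B - {a})} = B" "the_elem (B - {a}) \<in> X - {a}"
      "a * the_elem (B - {a}) = \<Prod>B"
      by (auto simp: insert_Diff_if)
  qed (use assms in auto)
  then show ?thesis by (simp add: sum_distrib_left)
qed

lemma card2_sum: assumes "finite X"
  shows "(\<Sum>B\<in>{B. B \<subseteq> X \<and> card B = 2}. \<Prod>B) = (\<Sum>c\<in>X. c * (\<Sum>b\<in>{b\<in>X. b<c}. b::nat))"
proof -
  have "(\<Sum>B\<in>{B. B \<subseteq> X \<and> card B = 2}. \<Prod>B) = (\<Sum>(c,b)\<in>Sigma X (\<lambda>c. {b\<in>X. b<c}). c * b)"
  proof (rule sum.reindex_bij_witness[where i="\<lambda>(c,b). {b,c}" and j="\<lambda>B. (Max B, Min B)"])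
    fix B assume B: "B \<in> {B. B \<subseteq> X \<and> card B = 2}"
    then obtain x y where xy: "B = {x,y}" "x \<noteq> y" by (auto simp: card_2_iff)
    then obtain u v where uv: "B = {u,v}" "u < v"
      by (metis insert_commute linorder_neqE_nat)
    then have mm: "Max B = v" "Min B = u" by auto
    show "(case (Max B, Min B) of (c, b) \<Rightarrow> {b, c}) = B"
      "(case (Max B, Min B) of (c, b) \<Rightarrow> c * b) = \<Prod>B"
      using uv unfolding mm by auto
    show "(Max B, Min B) \<in> Sigma X (\<lambda>c. {b \<in> X. b < c})"
      using uv B unfolding mm by auto
  qed (use assms in \<open>auto simp: max_def min_def card_2_iff\<close>)
  also have "\<dots> = (\<Sum>c\<in>X. c * (\<Sum>b\<in>{b\<in>X. b<c}. b))"
    using assms by (subst sum.Sigma[symmetric]) (auto simp: sum_distrib_left)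
  finally show ?thesis .
qed

theorem lemma2p2:
  fixes n k :: nat
  assumes "1 \<le> k" and "k < n"
    and "\<exists>p::nat. prime p \<and> real p > max (real ((k+2)*(k+3)) / 2) (real (3*k+8))
           \<and> real n / real (k+3) < real p \<and> real p \<le> real n / real (k+1)"
  shows "\<forall>i\<in>{1..n}. S n i k \<notin> \<int>"
proof
  fix i assume i: "i \<in> {1..n}"
  obtain p :: nat where pp: "prime p"
    and r1: "real p > real ((k+2)*(k+3)) / 2" and r2: "real p > real (3*k+8)"
    and r3: "real n / real (k+3) < real p" and r4: "real p \<le> real n / real (k+1)"
    using assms(3) by auto
  have "real ((k+2)*(k+3)) < real (2*p)" using r1 by simp
  then have h1: "(k+2)*(k+3) < 2*p" by (simp only: of_nat_less_iff)
  have h2: "3*k+8 < p" using r2 by linarith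
  have "real ((k+1)*p) \<le> real n" using r4 by (simp add: field_simps)
  then have h3: "(k+1)*p \<le> n" by (simp only: of_nat_le_iff)
  have "real n < real ((k+3)*p)" using r3 by (simp add: field_simps)
  then have h4: "n < (k+3)*p" by (simp only: of_nat_less_iff)
  have p0: "p > 0" using pp prime_gt_0_nat by blast
  define m where "m = n div p"
  have m1: "k+1 \<le> m" unfolding m_def using h3 p0 by (simp add: less_eq_div_iff_mult_less_eq)
  have m2: "m < k+3" unfolding m_def using h4 p0 by (simp add: div_less_iff_less_mult)
  have mp: "m < p" using m2 h2 by linarith
  show "S n i k \<notin> \<int>"
  proof
    assume "S n i k \<in> \<int>"
    then obtain z where z: "S n i k = of_int z" by (auto elim: Ints_cases)
    define U where "U = {1..n} - {i}"
    define TT where "TT = {T. T \<subseteq> U \<and> card T = k}"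
    define P where "P = {j\<in>{1..n}. j \<noteq> i \<and> p dvd j}"
    define R0 where "R0 = {j\<in>{1..n}. \<not> p dvd j}"
    define M where "M = \<Prod>R0 * fact m"
    define TP where "TP T = {j\<in>T. p dvd j}" for T :: "nat set"
    define TR where "TR T = {j\<in>T. \<not> p dvd j}" for T :: "nat set"
    define d where "d T = (\<Prod>j\<in>TP T. j div p) * \<Prod>(TR T)" for T
    define c where "c T = M div d T" for T
    define t where "t T = card (TP T)" for T
    have finU: "finite U" unfolding U_def by simp
    have finTT: "finite TT" unfolding TT_def
      by (rule finite_subset[of _ "Pow U"]) (auto simp: finU)
    have TTfin: "finite T" if "T \<in> TT" for T using that finU finite_subset unfolding TT_def by blast
    have divp_in: "j div p \<in> {1..m}" if "j \<in> {1..n}" "p dvd j" for j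
    proof -
      have "p \<le> j" using that dvd_imp_le by auto
      then have "p div p \<le> j div p" by (rule div_le_mono)
      then have "1 \<le> j div p" using p0 by simp
      moreover have "j div p \<le> m" unfolding m_def using that by (simp add: div_le_mono)
      ultimately show ?thesis by simp
    qed
    have injdiv: "inj_on (\<lambda>j. j div p) {j. p dvd j}"
      by (auto intro!: inj_onI elim!: dvdE simp: p0)
    have prodT: "\<Prod>T = p ^ t T * d T" if "T \<in> TT" for T
    proof -
      have "\<Prod>T = \<Prod>(TP T) * \<Prod>(TR T)"
      proof -
        have "T = TP T \<union> TR T" "TP T \<inter> TR T = {}" unfolding TP_def TR_def by auto
        then show ?thesis using TTfin[OF that]
          by (metis finite_Un prod.union_disjoint)
      qed
      moreover have "\<Prod>(TP T) = p ^ t T * (\<Prod>j\<in>TP T. j div p)"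
      proof -
        have "\<Prod>(TP T) = (\<Prod>j\<in>TP T. p * (j div p))"
          by (rule prod.cong) (auto simp: TP_def)
        then show ?thesis by (simp add: prod.distrib t_def)
      qed
      ultimately show ?thesis unfolding d_def by simp
    qed
    have dpos: "d T > 0" if "T \<in> TT" for T
    proof -
      have "\<forall>j\<in>T. j \<ge> 1" using that unfolding TT_def U_def by auto
      then have "\<Prod>T > 0" by (intro prod_pos) auto
      then have "p ^ t T * d T > 0" using prodT[OF that] by simp
      then show ?thesis by simp
    qed
    have ddvd: "d T dvd M" if "T \<in> TT" for T
    proof -
      have "(\<Prod>j\<in>TP T. j div p) = \<Prod>((\<lambda>j. j div p) ` TP T)"
        by (subst prod.reindex) (auto intro: inj_on_subset[OF injdiv] simp: TP_def)
      also have "\<dots> dvd \<Prod>{1..m}"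
        by (rule prod_dvd_prod_subset) (use that divp_in in \<open>auto simp: TP_def TT_def U_def\<close>)
      also have "\<Prod>{1..m} = fact m" by (simp add: fact_prod)
      finally have a: "(\<Prod>j\<in>TP T. j div p) dvd fact m" .
      have b: "\<Prod>(TR T) dvd \<Prod>R0"
        by (rule prod_dvd_prod_subset) (use that in \<open>auto simp: TR_def R0_def TT_def U_def\<close>)
      show ?thesis unfolding d_def M_def using mult_dvd_mono[OF a b] by (simp add: mult.commute)
    qed
    have tk: "t T \<le> k" if "T \<in> TT" for T
    proof -
      have "card (TP T) \<le> card T" by (rule card_mono) (auto simp: TP_def TTfin[OF that])
      then show ?thesis using that unfolding t_def TT_def by simp
    qed
    define N where "N = (\<Sum>T\<in>TT. p ^ (k - t T) * c T)"
    have realeq: "real (p^k * M) * S n i k = real N"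
    proof -
      have "real (p^k * M) * S n i k = (\<Sum>T\<in>TT. real (p^k * M) * (\<Prod>j\<in>T. 1 / real j))"
        unfolding S_def TT_def U_def by (simp add: sum_distrib_left)
      also have "\<dots> = (\<Sum>T\<in>TT. real (p ^ (k - t T) * c T))"
      proof (rule sum.cong)
        fix T assume T: "T \<in> TT"
        have "(\<Prod>j\<in>T. 1 / real j) = 1 / real (\<Prod>T)" by (simp add: prod_dividef)
        also have "\<dots> = 1 / (real p ^ t T * real (d T))" using prodT[OF T] by simp
        finally have e1: "(\<Prod>j\<in>T. 1 / real j) = 1 / (real p ^ t T * real (d T))" .
        have e2: "real M = real (d T) * real (c T)" unfolding c_def using ddvd[OF T]
          by (metis dvd_mult_div_cancel of_nat_mult)
        have e3: "real p ^ k = real p ^ (k - t T) * real p ^ t T"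
          using tk[OF T] by (simp add: power_add[symmetric])
        show "real (p^k * M) * (\<Prod>j\<in>T. 1 / real j) = real (p ^ (k - t T) * c T)"
          using dpos[OF T] p0 unfolding e1 by (simp add: e2 e3)
      qed simp
      finally show ?thesis unfolding N_def by simp
    qed
    have pN: "p dvd N"
    proof -
      have "real N = real (p^k * M) * real_of_int z" using realeq z by simp
      then have "int N = int (p^k * M) * z" by (metis of_int_eq_iff of_int_mult of_int_of_nat_eq)
      moreover have "p^k = p * p^(k-1)" using assms(1) by (metis Suc_diff_le diff_Suc_1 power_Suc)
      ultimately have "int p dvd int N" by simp
      then show ?thesis by simp
    qed
    define TT1 where "TT1 = {T. T \<subseteq> P \<and> card T = k}"
    have sub1: "TT1 \<subseteq> TT" unfolding TT1_def TT_def P_def U_def by auto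
    have split: "N = (\<Sum>T\<in>TT - TT1. p ^ (k - t T) * c T) + (\<Sum>T\<in>TT1. p ^ (k - t T) * c T)"
      unfolding N_def by (rule sum.subset_diff[OF sub1 finTT])
    have d2: "p dvd (\<Sum>T\<in>TT - TT1. p ^ (k - t T) * c T)"
    proof (rule dvd_sum)
      fix T assume T: "T \<in> TT - TT1"
      then obtain j where j: "j \<in> T" "j \<notin> P" unfolding TT1_def TT_def by auto
      then have "\<not> p dvd j" using T unfolding P_def TT_def U_def by auto
      then have "TP T \<subset> T" using j unfolding TP_def by auto
      then have "card (TP T) < card T" using TTfin T by (meson DiffD1 psubset_card_mono)
      then have "t T < k" using T unfolding t_def TT_def by simp
      then have "p dvd p ^ (k - t T)" by (simp add: dvd_power)
      then show "p dvd p ^ (k - t T) * c T" by simp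
    qed
    have d3: "p dvd (\<Sum>T\<in>TT1. p ^ (k - t T) * c T)"
    proof -
      have "p dvd (\<Sum>T\<in>TT - TT1. p ^ (k - t T) * c T) + (\<Sum>T\<in>TT1. p ^ (k - t T) * c T)"
        using pN unfolding split .
      then show ?thesis using dvd_add_right_iff[OF d2] by blast
    qed
    define G where "G = (\<Sum>T\<in>TT1. \<Prod>({1..m} - (\<lambda>j. j div p) ` T))"
    have cT1: "p ^ (k - t T) * c T = \<Prod>R0 * \<Prod>({1..m} - (\<lambda>j. j div p) ` T)" if T: "T \<in> TT1" for T
    proof -
      have TTT: "T \<in> TT" using T sub1 by auto
      have TPT: "TP T = T" "TR T = {}" using T unfolding TT1_def P_def TP_def TR_def by auto
      have tT: "t T = k" using T TPT unfolding t_def TT1_def by simp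
      have dT: "d T = \<Prod>((\<lambda>j. j div p) ` T)" unfolding d_def TPT
        using T by (subst prod.reindex) (auto intro: inj_on_subset[OF injdiv] simp: TT1_def P_def)
      have imsub: "(\<lambda>j. j div p) ` T \<subseteq> {1..m}" using T divp_in unfolding TT1_def P_def by auto
      have "fact m = \<Prod>{1..m}" by (simp add: fact_prod)
      also have "\<dots> = \<Prod>({1..m} - (\<lambda>j. j div p) ` T) * \<Prod>((\<lambda>j. j div p) ` T)"
        by (rule prod.subset_diff[OF imsub]) simp
      finally have "M = d T * (\<Prod>R0 * \<Prod>({1..m} - (\<lambda>j. j div p) ` T))"
        unfolding M_def dT by simp
      then have "c T = \<Prod>R0 * \<Prod>({1..m} - (\<lambda>j. j div p) ` T)"
        unfolding c_def using dpos[OF TTT] by simp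
      then show ?thesis using tT by simp
    qed
    have "(\<Sum>T\<in>TT1. p ^ (k - t T) * c T) = \<Prod>R0 * G"
      unfolding G_def sum_distrib_left by (rule sum.cong[OF refl]) (rule cT1)
    then have "p dvd \<Prod>R0 * G" using d3 by simp
    moreover have "\<not> p dvd \<Prod>R0"
    proof
      assume "p dvd \<Prod>R0"
      moreover have "finite R0" unfolding R0_def by simp
      ultimately obtain j where "j \<in> R0" "p dvd j" using pp prime_dvd_prod_iff[of R0 p id] by auto
      then show False unfolding R0_def by auto
    qed
    ultimately have pG: "p dvd G" using prime_dvd_mult_iff[OF pp] by blast
    define Z where "Z = {a\<in>{1..m}. p * a = i}"
    define BB where "BB = {B. B \<subseteq> {1..m} \<and> card B = m - k \<and> Z \<subseteq> B}"
    have km: "k \<le> m" using m1 by simp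
    have GF: "G = (\<Sum>B\<in>BB. \<Prod>B)"
      unfolding G_def
    proof (rule sum.reindex_bij_witness[where i="\<lambda>B. (\<lambda>a. p*a) ` ({1..m} - B)"
          and j="\<lambda>T. {1..m} - (\<lambda>j. j div p) ` T"])
      fix T assume T: "T \<in> TT1"
      have imsub: "(\<lambda>j. j div p) ` T \<subseteq> {1..m}" using T divp_in unfolding TT1_def P_def by auto
      have mulT: "p * (j div p) = j" if "j \<in> T" for j using that T unfolding TT1_def P_def by auto
      have "{1..m} - ({1..m} - (\<lambda>j. j div p) ` T) = (\<lambda>j. j div p) ` T" using imsub by auto
      then show "(\<lambda>a. p*a) ` ({1..m} - ({1..m} - (\<lambda>j. j div p) ` T)) = T"
        using mulT by (auto simp: image_image image_iff)
      have finT: "finite T" using T sub1 TTfin by auto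
      have cardim: "card ((\<lambda>j. j div p) ` T) = k"
        using T by (subst card_image) (auto intro: inj_on_subset[OF injdiv] simp: TT1_def P_def)
      have "card ({1..m} - (\<lambda>j. j div p) ` T) = m - k"
        using imsub cardim by (simp add: card_Diff_subset finT)
      moreover have "Z \<subseteq> {1..m} - (\<lambda>j. j div p) ` T"
      proof
        fix a assume a: "a \<in> Z"
        have "a \<notin> (\<lambda>j. j div p) ` T"
        proof
          assume "a \<in> (\<lambda>j. j div p) ` T"
          then obtain j where "j \<in> T" "a = j div p" by auto
          then have "j = i" using mulT a unfolding Z_def by auto
          then show False using \<open>j \<in> T\<close> T unfolding TT1_def P_def by auto
        qed
        then show "a \<in> {1..m} - (\<lambda>j. j div p) ` T" using a unfolding Z_def by auto
      qed
      ultimately show "{1..m} - (\<lambda>j. j div p) ` T \<in> BB" unfolding BB_def by auto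
      show "\<Prod>({1..m} - (\<lambda>j. j div p) ` T) = \<Prod>({1..m} - (\<lambda>j. j div p) ` T)" ..
    next
      fix B assume B: "B \<in> BB"
      have Bs: "B \<subseteq> {1..m}" using B unfolding BB_def by auto
      have "(\<lambda>j. j div p) ` (\<lambda>a. p*a) ` ({1..m} - B) = {1..m} - B"
        using p0 by (simp add: image_image)
      then show "{1..m} - (\<lambda>j. j div p) ` (\<lambda>a. p*a) ` ({1..m} - B) = B" using Bs by auto
      have inj: "inj_on (\<lambda>a. p*a) ({1..m} - B)" using p0 by (auto intro: inj_onI)
      have "card ({1..m} - B) = card {1..m} - card B"
        by (rule card_Diff_subset) (use Bs finite_subset in auto)
      then have "card ({1..m} - B) = k" using B km unfolding BB_def by simp
      then have "card ((\<lambda>a. p*a) ` ({1..m} - B)) = k" using card_image[OF inj] by simp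
      moreover have "(\<lambda>a. p*a) ` ({1..m} - B) \<subseteq> P"
      proof
        fix x assume "x \<in> (\<lambda>a. p*a) ` ({1..m} - B)"
        then obtain a where a: "a \<in> {1..m}" "a \<notin> B" "x = p*a" by auto
        have "p * a \<le> p * m" using a by simp
        also have "p * m \<le> n" unfolding m_def by (simp add: mult.commute)
        finally have "x \<le> n" using a by simp
        moreover have "x \<ge> 1" using a p0 by simp
        moreover have "x \<noteq> i" using a B unfolding BB_def Z_def by auto
        ultimately show "x \<in> P" unfolding P_def using a by auto
      qed
      ultimately show "(\<lambda>a. p*a) ` ({1..m} - B) \<in> TT1" unfolding TT1_def by auto
    qed
    have pF: "p dvd (\<Sum>B\<in>BB. \<Prod>B)" using pG GF by simp
    have notdvd: "\<not> p dvd x" if "0 < x" "x < p" for x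
      using that dvd_imp_le not_le by blast
    have Zc: "Z = {} \<or> (\<exists>a0. a0 \<in> {1..m} \<and> Z = {a0})"
    proof (cases "\<exists>a\<in>{1..m}. p*a = i")
      case True
      then obtain a where a: "a \<in> {1..m}" "p*a = i" by auto
      then have "Z = {a}" unfolding Z_def using p0 by auto
      then show ?thesis using a by blast
    next
      case False then show ?thesis unfolding Z_def by auto
    qed
    have m12: "m = k+1 \<or> m = k+2" using m1 m2 by linarith
    have sumI: "2 * (\<Sum>x\<in>{1..m}. x) = (m+1)*m"
      using gauss2[of "m+1"] by (simp add: atLeastLessThanSuc_atLeastAtMost)
    have "(m+1)*m \<le> (k+3)*(k+2)" using m2 by (intro mult_mono) auto
    then have sumlt: "(\<Sum>x\<in>{1..m}. x) < p" using sumI h1 by (simp add: mult.commute)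
    have m1': "1 \<le> m" using m1 by simp
    from Zc m12 show False
    proof (elim disjE exE conjE)
      assume Z: "Z = {}" and m: "m = k+1"
      have "BB = {B. B \<subseteq> {1..m} \<and> card B = 1}" unfolding BB_def using Z m by auto
      then have "(\<Sum>B\<in>BB. \<Prod>B) = (\<Sum>x\<in>{1..m}. x)" using card1_sum[of "{1..m}"] by simp
      moreover have "0 < (\<Sum>x\<in>{1..m}. x)" using sumI m1' by (metis gr0I mult_is_0 zero_less_Suc add_0 Suc_eq_plus1 not_one_le_zero)
      ultimately show False using pF notdvd sumlt by simp
    next
      fix a0 assume a0: "a0 \<in> {1..m}" and Z: "Z = {a0}" and m: "m = k+1"
      have "BB = {B. B \<subseteq> {1..m} \<and> card B = 1 \<and> a0 \<in> B}" unfolding BB_def using Z m by auto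
      then have "BB = {{a0}}" using card1_fix[of "{1..m}" a0] a0 by simp
      then have "(\<Sum>B\<in>BB. \<Prod>B) = a0" by simp
      moreover have "0 < a0" "a0 < p" using a0 mp by auto
      ultimately show False using pF notdvd by simp
    next
      fix a0 assume a0: "a0 \<in> {1..m}" and Z: "Z = {a0}" and m: "m = k+2"
      have "BB = {B. B \<subseteq> {1..m} \<and> card B = 2 \<and> a0 \<in> B}" unfolding BB_def using Z m by auto
      then have F: "(\<Sum>B\<in>BB. \<Prod>B) = a0 * (\<Sum>x\<in>{1..m}-{a0}. x)"
        using card2_fix[of "{1..m}" a0] a0 by simp
      have "(\<Sum>x\<in>{1..m}-{a0}. x) \<le> (\<Sum>x\<in>{1..m}. x)" by (rule sum_mono2) auto
      then have s1: "(\<Sum>x\<in>{1..m}-{a0}. x) < p" using sumlt by simp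
      obtain y where y: "y \<in> {1..m} - {a0}"
      proof (cases "a0 = 1")
        case True then show ?thesis using that[of 2] m by auto
      next
        case False then show ?thesis using that[of 1] m by auto
      qed
      have s0: "(\<Sum>x\<in>{1..m}-{a0}. x) \<noteq> 0" using y by (simp add: sum_eq_0_iff) (metis atLeastAtMost_iff not_one_le_zero)
      have "\<not> p dvd a0" using a0 mp notdvd by auto
      moreover have "\<not> p dvd (\<Sum>x\<in>{1..m}-{a0}. x)" using notdvd[OF _ s1] s0 by blast
      ultimately show False using pF F prime_dvd_mult_iff[OF pp] by simp
    next
      assume Z: "Z = {}" and m: "m = k+2"
      have "BB = {B. B \<subseteq> {1..m} \<and> card B = 2}" unfolding BB_def using Z m by auto
      then have "(\<Sum>B\<in>BB. \<Prod>B) = (\<Sum>c\<in>{1..m}. c * (\<Sum>b\<in>{b\<in>{1..m}. b<c}. b))"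
        using card2_sum[of "{1..m}"] by simp
      also have "\<dots> = (\<Sum>c\<in>{1..m}. c * (\<Sum>b\<in>{1..<c}. b))"
      proof (rule sum.cong[OF refl])
        fix c assume "c \<in> {1..m}"
        then have "{b\<in>{1..m}. b<c} = {1..<c}" by auto
        then show "c * (\<Sum>b\<in>{b\<in>{1..m}. b<c}. b) = c * (\<Sum>b\<in>{1..<c}. b)" by simp
      qed
      finally have "24 * (\<Sum>B\<in>BB. \<Prod>B) = (m-1)*m*(m+1)*(3*m+2)" using e2[of m] by simp
      then have "p dvd (m-1)*m*(m+1)*(3*m+2)" using pF by (metis dvd_mult)
      moreover have "\<not> p dvd (m-1)" "\<not> p dvd m" "\<not> p dvd (m+1)" "\<not> p dvd (3*m+2)"
        using notdvd m h2 mp by auto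
      ultimately show False by (simp only: prime_dvd_mult_iff[OF pp]) blast
    qed
  qed
qed

end
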